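(* Let $\lambda>1$, $\mu>1$. Then the system $$ \begin{cases} 2\,(a+\alpha)(3-a\alpha-a-\alpha)(3-a\alpha+a+\alpha)+(\lambda-\mu)(a-\alpha)^3=0,\\ (\lambda+\mu)^2(a-\alpha)^6=4\,(3+a\alpha)^3(1-a\alpha)(2+a+\alpha)(2-a-\alpha) \end{cases} $$ has at most one solution $(\alpha,a)$ with $-1<\alpha<a<1$. *)

theory Defs
  imports Complex_Main
begin

definition sys4p4 :: "real \<Rightarrow> real \<Rightarrow> real \<Rightarrow> real \<Rightarrow> bool" where
  "sys4p4 l m \<alpha> a \<longleftrightarrow>
     2 * (a + \<alpha>) * (3 - a*\<alpha> - a - \<alpha>) * (3 - a*\<alpha> + a + \<alpha>) + (l - m) * (a - \<alpha>)^3 = 0 \<and>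
     (l + m)^2 * (a - \<alpha>)^6 = 4 * (3 + a*\<alpha>)^3 * (1 - a*\<alpha>) * (2 + a + \<alpha>) * (2 - a - \<alpha>)"

end

theory Submission imports Defs begin
definition Qf :: "real \<Rightarrow> real \<Rightarrow> real" where
 "Qf x c = (3+x*c)^3*(1-x*c)*(4-(x+c)^2)"
definition Qd :: "real \<Rightarrow> real \<Rightarrow> real" where
 "Qd x c = 3*(3+x*c)^2*c*(1-x*c)*(4-(x+c)^2) - (3+x*c)^3*c*(4-(x+c)^2) - 2*(3+x*c)^3*(1-x*c)*(x+c)"
definition Nf :: "real \<Rightarrow> real \<Rightarrow> real" where
 "Nf x c = (x+c)*((3-x*c)^2-(x+c)^2)"
definition Nd :: "real \<Rightarrow> real \<Rightarrow> real" where
 "Nd x c = ((3-x*c)^2-(x+c)^2) + (x+c)*(-2*(3-x*c)*c - 2*(x+c))"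
definition PB :: "real \<Rightarrow> real \<Rightarrow> real" where
 "PB x c = 2*Nd x c*Qf x c - Nf x c*Qd x c"

lemma E1_pos:
  fixes \<alpha> a :: real
  assumes "-1 < \<alpha>" "\<alpha> < a" "a < 1"
  shows "0 < Qd \<alpha> a * (a - \<alpha>) + 6 * Qf \<alpha> a"
proof -
  define x where "x = 1 + \<alpha>"
  define y where "y = a - \<alpha>"
  define z where "z = 1 - a"
  have x: "0 < x" and y: "0 < y" and z: "0 < z" using assms by (auto simp: x_def y_def z_def)
  have id: "(2::real)^10 * (Qd \<alpha> a * (a - \<alpha>) + 6 * Qf \<alpha> a) = 8192*y^2*z^8 + 45056*y^3*z^7 + 108544*y^4*z^6 + 150528*y^5*z^5 + 132096*y^6*z^4 + 75264*y^7*z^3 + 27136*y^8*z^2 + 5632*y^9*z + 512*y^10 + 28672*x*y*z^8 + 176128*x*y^2*z^7 + 490496*x*y^3*z^6 + 798720*x*y^4*z^5 + 823296*x*y^5*z^4 + 546816*x*y^6*z^3 + 227840*x*y^7*z^2 + 54272*x*y^8*z + 5632*x*y^9 + 24576*x^2*z^8 + 210944*x^2*y*z^7 + 796672*x^2*y^2*z^6 + 1666560*x^2*y^3*z^5 + 2115072*x^2*y^4*z^4 + 1680384*x^2*y^5*z^3 + 820224*x^2*y^6*z^2 + 225280*x^2*y^7*z + 26624*x^2*y^8 + 73728*x^3*z^7 + 559104*x^3*y*z^6 + 1716224*x^3*y^2*z^5 + 2869760*x^3*y^3*z^4 + 2836480*x^3*y^4*z^3 + 1655808*x^3*y^5*z^2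 + 528384*x^3*y^6*z + 70656*x^3*y^7 + 147456*x^4*z^6 + 870400*x^4*y*z^5 + 2172928*x^4*y^2*z^4 + 2842112*x^4*y^3*z^3 + 2050560*x^4*y^4*z^2 + 769536*x^4*y^5*z + 115200*x^4*y^6 + 172032*x^5*z^5 + 874496*x^5*y*z^4 + 1687552*x^5*y^2*z^3 + 1595904*x^5*y^3*z^2 + 715776*x^5*y^4*z + 118272*x^5*y^5 + 147456*x^6*z^4 + 546816*x^6*y*z^3 + 763904*x^6*y^2*z^2 + 416768*x^6*y^3*z + 74752*x^6*y^4 + 73728*x^7*z^3 + 206848*x^7*y*z^2 + 139264*x^7*y^2*z + 26624*x^7*y^3 + 24576*x^8*z^2 + 20480*x^8*y*z + 4096*x^8*y^2"
    unfolding x_def y_def z_def Qf_def Qd_def PB_def Nf_def Nd_def by algebra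
  have "0 < 8192*y^2*z^8 + 45056*y^3*z^7 + 108544*y^4*z^6 + 150528*y^5*z^5 + 132096*y^6*z^4 + 75264*y^7*z^3 + 27136*y^8*z^2 + 5632*y^9*z + 512*y^10 + 28672*x*y*z^8 + 176128*x*y^2*z^7 + 490496*x*y^3*z^6 + 798720*x*y^4*z^5 + 823296*x*y^5*z^4 + 546816*x*y^6*z^3 + 227840*x*y^7*z^2 + 54272*x*y^8*z + 5632*x*y^9 + 24576*x^2*z^8 + 210944*x^2*y*z^7 + 796672*x^2*y^2*z^6 + 1666560*x^2*y^3*z^5 + 2115072*x^2*y^4*z^4 + 1680384*x^2*y^5*z^3 + 820224*x^2*y^6*z^2 + 225280*x^2*y^7*z + 26624*x^2*y^8 + 73728*x^3*z^7 + 559104*x^3*y*z^6 + 1716224*x^3*y^2*z^5 + 2869760*x^3*y^3*z^4 + 2836480*x^3*y^4*z^3 + 1655808*x^3*y^5*z^2 + 528384*x^3*y^6*z + 70656*x^3*y^7 + 147456*x^4*z^6 + 870400*x^4*y*z^5 + 2172928*x^4*y^2*z^4 + 2842112*x^4*y^3*z^3 + 2050560*x^4*y^4*z^2 + 769536*x^4*y^5*z + 115200*x^4*y^6 + 172032*x^5*z^5 + 874496*x^5*y*z^4 + 1687552*x^5*y^2*z^3 + 1595904*x^5*y^3*z^2 + 715776*x^5*y^4*z + 118272*x^5*y^5 + 147456*x^6*z^4 + 546816*x^6*y*z^3 + 763904*x^6*y^2*z^2 + 416768*x^6*y^3*z + 74752*x^6*y^4 + 73728*x^7*z^3 + 206848*x^7*y*z^2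 + 139264*x^7*y^2*z + 26624*x^7*y^3 + 24576*x^8*z^2 + 20480*x^8*y*z + 4096*x^8*y^2"
    using x y z by (intro add_pos_pos mult_pos_pos zero_less_power; simp)
  then have "0 < (2::real)^10 * (Qd \<alpha> a * (a - \<alpha>) + 6 * Qf \<alpha> a)" using id by simp
  then show ?thesis by (simp add: zero_less_mult_iff)
qed

lemma E2_pos:
  fixes \<alpha> a :: real
  assumes "-1 < \<alpha>" "\<alpha> < a" "a < 1"
  shows "0 < Qd a \<alpha> * (\<alpha> - a) + 6 * Qf a \<alpha>"
proof -
  define x where "x = 1 + \<alpha>"
  define y where "y = a - \<alpha>"
  define z where "z = 1 - a"
  have x: "0 < x" and y: "0 < y" and z: "0 < z" using assms by (auto simp: x_def y_def z_def)
  have id: "(2::real)^10 * (Qd a \<alpha> * (\<alpha> - a) + 6 * Qf a \<alpha>) = 4096*y^2*z^8 + 26624*y^3*z^7 + 74752*y^4*z^6 + 118272*y^5*z^5 + 115200*y^6*z^4 + 70656*y^7*z^3 + 26624*y^8*z^2 + 5632*y^9*z + 512*y^10 + 20480*x*y*z^8 + 139264*x*y^2*z^7 + 416768*x*y^3*z^6 + 715776*x*y^4*z^5 + 769536*x*y^5*z^4 + 528384*x*y^6*z^3 + 225280*x*y^7*z^2 + 54272*x*y^8*z + 5632*x*y^9 + 24576*x^2*z^8 + 206848*x^2*y*z^7 + 763904*x^2*y^2*z^6 + 1595904*x^2*y^3*z^5 + 2050560*x^2*y^4*z^4 + 1655808*x^2*y^5*z^3 + 820224*x^2*y^6*z^2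 + 227840*x^2*y^7*z + 27136*x^2*y^8 + 73728*x^3*z^7 + 546816*x^3*y*z^6 + 1687552*x^3*y^2*z^5 + 2842112*x^3*y^3*z^4 + 2836480*x^3*y^4*z^3 + 1680384*x^3*y^5*z^2 + 546816*x^3*y^6*z + 75264*x^3*y^7 + 147456*x^4*z^6 + 874496*x^4*y*z^5 + 2172928*x^4*y^2*z^4 + 2869760*x^4*y^3*z^3 + 2115072*x^4*y^4*z^2 + 823296*x^4*y^5*z + 132096*x^4*y^6 + 172032*x^5*z^5 + 870400*x^5*y*z^4 + 1716224*x^5*y^2*z^3 + 1666560*x^5*y^3*z^2 + 798720*x^5*y^4*z + 150528*x^5*y^5 + 147456*x^6*z^4 + 559104*x^6*y*z^3 + 796672*x^6*y^2*z^2 + 490496*x^6*y^3*z + 108544*x^6*y^4 + 73728*x^7*z^3 + 210944*x^7*y*z^2 + 176128*x^7*y^2*z + 45056*x^7*y^3 + 24576*x^8*z^2 + 28672*x^8*y*z + 8192*x^8*y^2"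
    unfolding x_def y_def z_def Qf_def Qd_def PB_def Nf_def Nd_def by algebra
  have "0 < 4096*y^2*z^8 + 26624*y^3*z^7 + 74752*y^4*z^6 + 118272*y^5*z^5 + 115200*y^6*z^4 + 70656*y^7*z^3 + 26624*y^8*z^2 + 5632*y^9*z + 512*y^10 + 20480*x*y*z^8 + 139264*x*y^2*z^7 + 416768*x*y^3*z^6 + 715776*x*y^4*z^5 + 769536*x*y^5*z^4 + 528384*x*y^6*z^3 + 225280*x*y^7*z^2 + 54272*x*y^8*z + 5632*x*y^9 + 24576*x^2*z^8 + 206848*x^2*y*z^7 + 763904*x^2*y^2*z^6 + 1595904*x^2*y^3*z^5 + 2050560*x^2*y^4*z^4 + 1655808*x^2*y^5*z^3 + 820224*x^2*y^6*z^2 + 227840*x^2*y^7*z + 27136*x^2*y^8 + 73728*x^3*z^7 + 546816*x^3*y*z^6 + 1687552*x^3*y^2*z^5 + 2842112*x^3*y^3*z^4 + 2836480*x^3*y^4*z^3 + 1680384*x^3*y^5*z^2 + 546816*x^3*y^6*z + 75264*x^3*y^7 + 147456*x^4*z^6 + 874496*x^4*y*z^5 + 2172928*x^4*y^2*z^4 + 2869760*x^4*y^3*z^3 + 2115072*x^4*y^4*z^2 + 823296*x^4*y^5*z + 132096*x^4*y^6 + 172032*x^5*z^5 + 870400*x^5*y*z^4 + 1716224*x^5*y^2*z^3 + 1666560*x^5*y^3*z^2 + 798720*x^5*y^4*z + 150528*x^5*y^5 + 147456*x^6*z^4 + 559104*x^6*y*z^3 + 796672*x^6*y^2*z^2 +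 490496*x^6*y^3*z + 108544*x^6*y^4 + 73728*x^7*z^3 + 210944*x^7*y*z^2 + 176128*x^7*y^2*z + 45056*x^7*y^3 + 24576*x^8*z^2 + 28672*x^8*y*z + 8192*x^8*y^2"
    using x y z by (intro add_pos_pos mult_pos_pos zero_less_power; simp)
  then have "0 < (2::real)^10 * (Qd a \<alpha> * (\<alpha> - a) + 6 * Qf a \<alpha>)" using id by simp
  then show ?thesis by (simp add: zero_less_mult_iff)
qed

lemma E3_pos:
  fixes \<alpha> a :: real
  assumes "-1 < \<alpha>" "\<alpha> < a" "a < 1"
  shows "0 < PB \<alpha> a"
proof -
  define x where "x = 1 + \<alpha>"
  define y where "y = a - \<alpha>"
  define z where "z = 1 - a"
  have x: "0 < x" and y: "0 < y" and z: "0 < z" using assms by (auto simp: x_def y_def z_def)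
  have id: "(2::real)^12 * (PB \<alpha> a) = 98304*y^4*z^8 + 540672*y^5*z^7 + 1269760*y^6*z^6 + 1658880*y^7*z^5 + 1314816*y^8*z^4 + 645120*y^9*z^3 + 190464*y^10*z^2 + 30720*y^11*z + 2048*y^12 + 671744*x*y^3*z^8 + 3751936*x*y^4*z^7 + 9113600*x*y^5*z^6 + 12533760*x*y^6*z^5 + 10616832*x*y^7*z^4 + 5627904*x*y^8*z^3 + 1804288*x*y^9*z^2 + 315392*x*y^10*z + 22528*x*y^11 + 1769472*x^2*y^2*z^8 + 10313728*x^2*y^3*z^7 + 26804224*x^2*y^4*z^6 + 40040448*x^2*y^5*z^5 + 37066752*x^2*y^6*z^4 + 21467136*x^2*y^7*z^3 + 7483392*x^2*y^8*z^2 + 1409024*x^2*y^9*z + 106496*x^2*y^10 + 2064384*x^3*y*z^8 + 13565952*x^3*y^2*z^7 + 40697856*x^3*y^3*z^6 + 69697536*x^3*y^4*z^5 + 72787968*x^3*y^5*z^4 + 46784512*x^3*y^6*z^3 + 17805312*x^3*y^7*z^2 + 3588096*x^3*y^8*z + 282624*x^3*y^9 + 884736*x^4*z^8 + 8257536*x^4*y*z^7 + 33546240*x^4*y^2*z^6 + 71352320*x^4*y^3*z^5 + 87580672*x^4*y^4*z^4 + 63789056*x^4*y^5*z^3 + 26658816*x^4*y^6*z^2 + 5707776*x^4*y^7*z + 460800*x^4*y^8 + 1769472*x^5*z^7 + 14450688*x^5*y*z^6 + 42909696*x^5*y^2*z^5 + 65781760*x^5*y^3*z^4 + 55902208*x^5*y^4*z^3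 + 25798656*x^5*y^5*z^2 + 5812224*x^5*y^6*z + 473088*x^5*y^7 + 2654208*x^6*z^6 + 13860864*x^6*y*z^5 + 30007296*x^6*y^2*z^4 + 30965760*x^6*y^3*z^3 + 15802368*x^6*y^4*z^2 + 3698688*x^6*y^5*z + 299008*x^6*y^6 + 1769472*x^7*z^5 + 7667712*x^7*y*z^4 + 10027008*x^7*y^2*z^3 + 5611520*x^7*y^3*z^2 + 1343488*x^7*y^4*z + 106496*x^7*y^5 + 884736*x^8*z^4 + 1474560*x^8*y*z^3 + 884736*x^8*y^2*z^2 + 212992*x^8*y^3*z + 16384*x^8*y^4"
    unfolding x_def y_def z_def Qf_def Qd_def PB_def Nf_def Nd_def by algebra
  have "0 < 98304*y^4*z^8 + 540672*y^5*z^7 + 1269760*y^6*z^6 + 1658880*y^7*z^5 + 1314816*y^8*z^4 + 645120*y^9*z^3 + 190464*y^10*z^2 + 30720*y^11*z + 2048*y^12 + 671744*x*y^3*z^8 + 3751936*x*y^4*z^7 + 9113600*x*y^5*z^6 + 12533760*x*y^6*z^5 + 10616832*x*y^7*z^4 + 5627904*x*y^8*z^3 + 1804288*x*y^9*z^2 + 315392*x*y^10*z + 22528*x*y^11 + 1769472*x^2*y^2*z^8 + 10313728*x^2*y^3*z^7 + 26804224*x^2*y^4*z^6 + 40040448*x^2*y^5*z^5 + 37066752*x^2*y^6*z^4 + 21467136*x^2*y^7*z^3 + 7483392*x^2*y^8*z^2 + 1409024*x^2*y^9*z + 106496*x^2*y^10 + 2064384*x^3*y*z^8 + 13565952*x^3*y^2*z^7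 + 40697856*x^3*y^3*z^6 + 69697536*x^3*y^4*z^5 + 72787968*x^3*y^5*z^4 + 46784512*x^3*y^6*z^3 + 17805312*x^3*y^7*z^2 + 3588096*x^3*y^8*z + 282624*x^3*y^9 + 884736*x^4*z^8 + 8257536*x^4*y*z^7 + 33546240*x^4*y^2*z^6 + 71352320*x^4*y^3*z^5 + 87580672*x^4*y^4*z^4 + 63789056*x^4*y^5*z^3 + 26658816*x^4*y^6*z^2 + 5707776*x^4*y^7*z + 460800*x^4*y^8 + 1769472*x^5*z^7 + 14450688*x^5*y*z^6 + 42909696*x^5*y^2*z^5 + 65781760*x^5*y^3*z^4 + 55902208*x^5*y^4*z^3 + 25798656*x^5*y^5*z^2 + 5812224*x^5*y^6*z + 473088*x^5*y^7 + 2654208*x^6*z^6 + 13860864*x^6*y*z^5 + 30007296*x^6*y^2*z^4 + 30965760*x^6*y^3*z^3 + 15802368*x^6*y^4*z^2 + 3698688*x^6*y^5*z + 299008*x^6*y^6 + 1769472*x^7*z^5 + 7667712*x^7*y*z^4 + 10027008*x^7*y^2*z^3 + 5611520*x^7*y^3*z^2 + 1343488*x^7*y^4*z + 106496*x^7*y^5 + 884736*x^8*z^4 + 1474560*x^8*y*z^3 + 884736*x^8*y^2*z^2 + 212992*x^8*y^3*z + 16384*x^8*y^4"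
    using x y z by (intro add_pos_pos mult_pos_pos zero_less_power; simp)
  then have "0 < (2::real)^12 * (PB \<alpha> a)" using id by simp
  then show ?thesis by (simp add: zero_less_mult_iff)
qed

lemma E4_pos:
  fixes \<alpha> a :: real
  assumes "-1 < \<alpha>" "\<alpha> < a" "a < 1"
  shows "0 < PB a \<alpha>"
proof -
  define x where "x = 1 + \<alpha>"
  define y where "y = a - \<alpha>"
  define z where "z = 1 - a"
  have x: "0 < x" and y: "0 < y" and z: "0 < z" using assms by (auto simp: x_def y_def z_def)
  have id: "(2::real)^12 * (PB a \<alpha>) = 16384*y^4*z^8 + 106496*y^5*z^7 + 299008*y^6*z^6 + 473088*y^7*z^5 + 460800*y^8*z^4 + 282624*y^9*z^3 + 106496*y^10*z^2 + 22528*y^11*z + 2048*y^12 + 212992*x*y^3*z^8 + 1343488*x*y^4*z^7 + 3698688*x*y^5*z^6 + 5812224*x*y^6*z^5 + 5707776*x*y^7*z^4 + 3588096*x*y^8*z^3 + 1409024*x*y^9*z^2 + 315392*x*y^10*z + 30720*x*y^11 + 884736*x^2*y^2*z^8 + 5611520*x^2*y^3*z^7 + 15802368*x^2*y^4*z^6 + 25798656*x^2*y^5*z^5 + 26658816*x^2*y^6*z^4 + 17805312*x^2*y^7*z^3 + 7483392*x^2*y^8*z^2 + 1804288*x^2*y^9*z + 190464*x^2*y^10 + 1474560*x^3*y*z^8 + 10027008*x^3*y^2*z^7 + 30965760*x^3*y^3*z^6 + 55902208*x^3*y^4*z^5 + 63789056*x^3*y^5*z^4 + 46784512*x^3*y^6*z^3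 + 21467136*x^3*y^7*z^2 + 5627904*x^3*y^8*z + 645120*x^3*y^9 + 884736*x^4*z^8 + 7667712*x^4*y*z^7 + 30007296*x^4*y^2*z^6 + 65781760*x^4*y^3*z^5 + 87580672*x^4*y^4*z^4 + 72787968*x^4*y^5*z^3 + 37066752*x^4*y^6*z^2 + 10616832*x^4*y^7*z + 1314816*x^4*y^8 + 1769472*x^5*z^7 + 13860864*x^5*y*z^6 + 42909696*x^5*y^2*z^5 + 71352320*x^5*y^3*z^4 + 69697536*x^5*y^4*z^3 + 40040448*x^5*y^5*z^2 + 12533760*x^5*y^6*z + 1658880*x^5*y^7 + 2654208*x^6*z^6 + 14450688*x^6*y*z^5 + 33546240*x^6*y^2*z^4 + 40697856*x^6*y^3*z^3 + 26804224*x^6*y^4*z^2 + 9113600*x^6*y^5*z + 1269760*x^6*y^6 + 1769472*x^7*z^5 + 8257536*x^7*y*z^4 + 13565952*x^7*y^2*z^3 + 10313728*x^7*y^3*z^2 + 3751936*x^7*y^4*z + 540672*x^7*y^5 + 884736*x^8*z^4 + 2064384*x^8*y*z^3 + 1769472*x^8*y^2*z^2 + 671744*x^8*y^3*z + 98304*x^8*y^4"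
    unfolding x_def y_def z_def Qf_def Qd_def PB_def Nf_def Nd_def by algebra
  have "0 < 16384*y^4*z^8 + 106496*y^5*z^7 + 299008*y^6*z^6 + 473088*y^7*z^5 + 460800*y^8*z^4 + 282624*y^9*z^3 + 106496*y^10*z^2 + 22528*y^11*z + 2048*y^12 + 212992*x*y^3*z^8 + 1343488*x*y^4*z^7 + 3698688*x*y^5*z^6 + 5812224*x*y^6*z^5 + 5707776*x*y^7*z^4 + 3588096*x*y^8*z^3 + 1409024*x*y^9*z^2 + 315392*x*y^10*z + 30720*x*y^11 + 884736*x^2*y^2*z^8 + 5611520*x^2*y^3*z^7 + 15802368*x^2*y^4*z^6 + 25798656*x^2*y^5*z^5 + 26658816*x^2*y^6*z^4 + 17805312*x^2*y^7*z^3 + 7483392*x^2*y^8*z^2 + 1804288*x^2*y^9*z + 190464*x^2*y^10 + 1474560*x^3*y*z^8 + 10027008*x^3*y^2*z^7 + 30965760*x^3*y^3*z^6 + 55902208*x^3*y^4*z^5 + 63789056*x^3*y^5*z^4 + 46784512*x^3*y^6*z^3 + 21467136*x^3*y^7*z^2 + 5627904*x^3*y^8*z + 645120*x^3*y^9 + 884736*x^4*z^8 + 7667712*x^4*y*z^7 + 30007296*x^4*y^2*z^6 + 65781760*x^4*y^3*z^5 + 87580672*x^4*y^4*z^4 + 72787968*x^4*y^5*z^3 + 37066752*x^4*y^6*z^2 + 10616832*x^4*y^7*z + 1314816*x^4*y^8 + 1769472*x^5*z^7 + 13860864*x^5*y*z^6 + 42909696*x^5*y^2*z^5 + 71352320*x^5*y^3*z^4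 + 69697536*x^5*y^4*z^3 + 40040448*x^5*y^5*z^2 + 12533760*x^5*y^6*z + 1658880*x^5*y^7 + 2654208*x^6*z^6 + 14450688*x^6*y*z^5 + 33546240*x^6*y^2*z^4 + 40697856*x^6*y^3*z^3 + 26804224*x^6*y^4*z^2 + 9113600*x^6*y^5*z + 1269760*x^6*y^6 + 1769472*x^7*z^5 + 8257536*x^7*y*z^4 + 13565952*x^7*y^2*z^3 + 10313728*x^7*y^3*z^2 + 3751936*x^7*y^4*z + 540672*x^7*y^5 + 884736*x^8*z^4 + 2064384*x^8*y*z^3 + 1769472*x^8*y^2*z^2 + 671744*x^8*y^3*z + 98304*x^8*y^4"
    using x y z by (intro add_pos_pos mult_pos_pos zero_less_power; simp)
  then have "0 < (2::real)^12 * (PB a \<alpha>)" using id by simp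
  then show ?thesis by (simp add: zero_less_mult_iff)
qed

definition Uf :: "real \<Rightarrow> real \<Rightarrow> real" where "Uf x c = Qf x c / (c - x)^6"
definition Wf :: "real \<Rightarrow> real \<Rightarrow> real" where "Wf x c = Nf x c / sqrt (Qf x c)"

lemma Qf_pos:
  fixes x c :: real
  assumes "-1 < x" "x < 1" "-1 < c" "c < 1"
  shows "0 < Qf x c"
proof -
  have h: "\<bar>x*c\<bar> < 1" using assms
    using abs_mult_less[of x 1 c 1] by (simp add: abs_mult abs_less_iff)
  have a1: "0 < 3 + x*c" using h by linarith
  have a2: "0 < 1 - x*c" using h by linarith
  have a3: "0 < 4 - (x+c)^2"
  proof -
    have "\<bar>x+c\<bar> < 2" using assms by linarith
    then have "(x+c)^2 < 2^2" by (metis abs_ge_zero power_strict_mono power2_abs zero_less_numeral pos2)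
    then show ?thesis by simp
  qed
  show ?thesis unfolding Qf_def using a1 a2 a3 by simp
qed

lemma Qf_sym: "Qf x c = Qf c x" unfolding Qf_def by (simp add: algebra_simps)
lemma Nf_sym: "Nf x c = Nf c x" unfolding Nf_def by (simp add: algebra_simps)
lemma Uf_sym: "Uf x c = Uf c x"
proof -
  have "(c-x)^6 = (x-c)^(6::nat)" by algebra
  then show ?thesis unfolding Uf_def by (simp add: Qf_sym)
qed
lemma Wf_sym: "Wf x c = Wf c x" unfolding Wf_def by (simp add: Qf_sym Nf_sym)

lemma DERIV_Qf: "((\<lambda>t. Qf t c) has_real_derivative Qd x c) (at x)"
  unfolding Qf_def Qd_def
  by (auto intro!: derivative_eq_intros simp: algebra_simps)

lemma DERIV_Nf: "((\<lambda>t. Nf t c) has_real_derivative Nd x c) (at x)"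
  unfolding Nf_def Nd_def
  by (auto intro!: derivative_eq_intros simp: algebra_simps)

lemma DERIV_Uf:
  assumes "x \<noteq> c"
  shows "((\<lambda>t. Uf t c) has_real_derivative (Qd x c * (c - x) + 6 * Qf x c) / (c - x)^7) (at x)"
proof -
  have g: "((\<lambda>t. (c - t)^6) has_real_derivative (- 6 * (c - x)^5)) (at x)"
    by (auto intro!: derivative_eq_intros)
  have ne: "(c - x)^6 \<noteq> 0" using assms by simp
  have "((\<lambda>t. Qf t c / (c - t)^6) has_real_derivative
        (Qd x c * (c - x)^6 - (- 6 * (c - x)^5) * Qf x c) / (((c - x)^6) ^ Suc (Suc 0))) (at x)"
    by (rule DERIV_quotient[OF DERIV_Qf g ne])
  moreover have "(Qd x c * (c - x)^6 - (- 6 * (c - x)^5) * Qf x c) / (((c - x)^6) ^ Suc (Suc 0))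
      = (Qd x c * (c - x) + 6 * Qf x c) / (c - x)^7"
    using assms by (simp add: field_simps power2_eq_square) (simp add: algebra_simps power_def)
  ultimately show ?thesis unfolding Uf_def by simp
qed

lemma DERIV_Wf:
  assumes "0 < Qf x c"
  shows "((\<lambda>t. Wf t c) has_real_derivative PB x c / (2 * Qf x c * sqrt (Qf x c))) (at x)"
proof -
  have g: "((\<lambda>t. sqrt (Qf t c)) has_real_derivative (inverse (sqrt (Qf x c)) / 2 * Qd x c)) (at x)"
    by (rule DERIV_chain2[OF DERIV_real_sqrt[OF assms] DERIV_Qf])
  have sp: "0 < sqrt (Qf x c)" using assms by simp
  have ne: "sqrt (Qf x c) \<noteq> 0" using sp by simp
  have "((\<lambda>t. Nf t c / sqrt (Qf t c)) has_real_derivative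
        (Nd x c * sqrt (Qf x c) - (inverse (sqrt (Qf x c)) / 2 * Qd x c) * Nf x c) / (sqrt (Qf x c) ^ Suc (Suc 0))) (at x)"
    by (rule DERIV_quotient[OF DERIV_Nf g ne])
  moreover have "(Nd x c * sqrt (Qf x c) - (inverse (sqrt (Qf x c)) / 2 * Qd x c) * Nf x c) / (sqrt (Qf x c) ^ Suc (Suc 0))
      = PB x c / (2 * Qf x c * sqrt (Qf x c))"
  proof -
    have sq: "sqrt (Qf x c) * sqrt (Qf x c) = Qf x c" using assms by simp
    show ?thesis unfolding PB_def using sp assms
      by (simp add: field_simps power2_eq_square sq)
  qed
  ultimately show ?thesis unfolding Wf_def by simp
qed


lemma U_mono1:
  assumes "-1 < \<alpha>1" "\<alpha>1 < \<alpha>2" "\<alpha>2 < a" "a < 1"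
  shows "Uf \<alpha>1 a < Uf \<alpha>2 a"
proof (rule DERIV_pos_imp_increasing[OF assms(2)])
  fix t assume t: "\<alpha>1 \<le> t" "t \<le> \<alpha>2"
  have "0 < Qd t a * (a - t) + 6 * Qf t a" using E1_pos[of t a] assms t by simp
  moreover have "0 < (a - t)^7" using assms t by simp
  ultimately show "\<exists>y. DERIV (\<lambda>t. Uf t a) t :> y \<and> 0 < y"
    using DERIV_Uf[of t a] assms t by (intro exI[of _ "(Qd t a * (a - t) + 6 * Qf t a) / (a - t)^7"]) simp
qed

lemma U_mono2:
  assumes "-1 < \<alpha>" "\<alpha> < a1" "a1 < a2" "a2 < 1"
  shows "Uf \<alpha> a2 < Uf \<alpha> a1"
proof -
  have "Uf a1 \<alpha> > Uf a2 \<alpha>"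
  proof (rule DERIV_neg_imp_decreasing[OF assms(3)])
    fix t assume t: "a1 \<le> t" "t \<le> a2"
    have "0 < Qd t \<alpha> * (\<alpha> - t) + 6 * Qf t \<alpha>" using E2_pos[of \<alpha> t] assms t by simp
    moreover have "(\<alpha> - t)^7 < 0" using assms t by (simp add: power_less_zero_eq)
    ultimately show "\<exists>y. DERIV (\<lambda>t. Uf t \<alpha>) t :> y \<and> y < 0"
      using DERIV_Uf[of t \<alpha>] assms t
      by (intro exI[of _ "(Qd t \<alpha> * (\<alpha> - t) + 6 * Qf t \<alpha>) / (\<alpha> - t)^7"]) (simp add: divide_pos_neg)
  qed
  then show ?thesis by (simp add: Uf_sym)
qed

lemma W_mono1:
  assumes "-1 < \<alpha>1" "\<alpha>1 < \<alpha>2" "\<alpha>2 < a" "a < 1"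
  shows "Wf \<alpha>1 a < Wf \<alpha>2 a"
proof (rule DERIV_pos_imp_increasing[OF assms(2)])
  fix t assume t: "\<alpha>1 \<le> t" "t \<le> \<alpha>2"
  have p: "0 < PB t a" using E3_pos[of t a] assms t by simp
  have q: "0 < Qf t a" using Qf_pos[of t a] assms t by simp
  have "0 < PB t a / (2 * Qf t a * sqrt (Qf t a))" using p q by simp
  then show "\<exists>y. DERIV (\<lambda>t. Wf t a) t :> y \<and> 0 < y"
    using DERIV_Wf[OF q] by blast
qed

lemma W_mono2:
  assumes "-1 < \<alpha>" "\<alpha> < a1" "a1 < a2" "a2 < 1"
  shows "Wf \<alpha> a1 < Wf \<alpha> a2"
proof -
  have "Wf a1 \<alpha> < Wf a2 \<alpha>"
  proof (rule DERIV_pos_imp_increasing[OF assms(3)])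
    fix t assume t: "a1 \<le> t" "t \<le> a2"
    have p: "0 < PB t \<alpha>" using E4_pos[of \<alpha> t] assms t by simp
    have q: "0 < Qf t \<alpha>" using Qf_pos[of t \<alpha>] assms t by simp
    have "0 < PB t \<alpha> / (2 * Qf t \<alpha> * sqrt (Qf t \<alpha>))" using p q by simp
    then show "\<exists>y. DERIV (\<lambda>t. Wf t \<alpha>) t :> y \<and> 0 < y"
      using DERIV_Wf[OF q] by blast
  qed
  then show ?thesis by (simp add: Wf_sym)
qed

lemma sys_UW:
  assumes "l > 1" "m > 1" "-1 < \<alpha>" "\<alpha> < a" "a < 1" "sys4p4 l m \<alpha> a"
  shows "Uf \<alpha> a = (l+m)^2/4 \<and> Wf \<alpha> a = (m - l)/(l + m)"
proof -
  define d where "d = a - \<alpha>"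
  have d: "0 < d" using assms d_def by simp
  have s1: "2*(a+\<alpha>)*(3-a*\<alpha>-a-\<alpha>)*(3-a*\<alpha>+a+\<alpha>) + (l-m)*(a-\<alpha>)^3 = 0"
    and s2: "(l+m)^2*(a-\<alpha>)^6 = 4*(3+a*\<alpha>)^3*(1-a*\<alpha>)*(2+a+\<alpha>)*(2-a-\<alpha>)"
    using assms(6) unfolding sys4p4_def by auto
  have n: "2 * Nf \<alpha> a = 2*(a+\<alpha>)*(3-a*\<alpha>-a-\<alpha>)*(3-a*\<alpha>+a+\<alpha>)" unfolding Nf_def by algebra
  have q: "4 * Qf \<alpha> a = 4*(3+a*\<alpha>)^3*(1-a*\<alpha>)*(2+a+\<alpha>)*(2-a-\<alpha>)" unfolding Qf_def by algebra
  have e1: "2 * Nf \<alpha> a + (l - m) * d^3 = 0" using s1 n d_def by simp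
  have e2: "(l+m)^2 * d^6 = 4 * Qf \<alpha> a" using s2 q d_def by simp
  have U: "Uf \<alpha> a = (l+m)^2/4"
    unfolding Uf_def d_def[symmetric] using e2 d by (simp add: field_simps)
  have "Qf \<alpha> a = ((l+m) * d^3 / 2)^2" using e2 by (simp add: power_mult_distrib power2_eq_square field_simps)
  moreover have "0 < (l+m) * d^3 / 2" using assms d by simp
  ultimately have sq: "sqrt (Qf \<alpha> a) = (l+m) * d^3 / 2" by simp
  have nf: "Nf \<alpha> a = (m - l) * d^3 / 2" using e1 by (simp add: algebra_simps)
  have W: "Wf \<alpha> a = (m - l)/(l + m)"
  proof -
    have "Wf \<alpha> a = ((m - l) * d^3 / 2) / ((l+m) * d^3 / 2)" unfolding Wf_def sq nf ..
    also have "\<dots> = (m - l)/(l + m)" using d by simp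
    finally show ?thesis .
  qed
  show ?thesis using U W by simp
qed

lemma key:
  assumes "-1 < \<alpha>" "\<alpha> < a" "a < 1" "-1 < \<beta>" "\<beta> < b" "b < 1" "\<alpha> < \<beta>"
  shows "Uf \<alpha> a \<noteq> Uf \<beta> b \<or> Wf \<alpha> a \<noteq> Wf \<beta> b"
proof (cases "b \<le> a")
  case True
  have "Uf \<alpha> a < Uf \<beta> a" using U_mono1[of \<alpha> \<beta> a] assms True by simp
  moreover have "Uf \<beta> a \<le> Uf \<beta> b"
    using U_mono2[of \<beta> b a] assms True by (cases "b = a") auto
  ultimately show ?thesis by simp
next
  case False
  have "Wf \<alpha> a < Wf \<alpha> b" using W_mono2[of \<alpha> a b] assms False by simp
  moreover have "Wf \<alpha> b < Wf \<beta> b" using W_mono1[of \<alpha> \<beta> b] assms by simp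
  ultimately show ?thesis by simp
qed

theorem corollary4p4:
  fixes l m :: real  (* lambda, mu *)
  assumes "l > 1" and "m > 1"
  shows "\<forall>\<alpha> a \<beta> b. (-1 < \<alpha> \<and> \<alpha> < a \<and> a < 1 \<and> sys4p4 l m \<alpha> a) \<and>
                      (-1 < \<beta> \<and> \<beta> < b \<and> b < 1 \<and> sys4p4 l m \<beta> b)
                      \<longrightarrow> \<alpha> = \<beta> \<and> a = b"
proof (intro allI impI)
  fix \<alpha> a \<beta> b :: real
  assume h: "(-1 < \<alpha> \<and> \<alpha> < a \<and> a < 1 \<and> sys4p4 l m \<alpha> a) \<and>
             (-1 < \<beta> \<and> \<beta> < b \<and> b < 1 \<and> sys4p4 l m \<beta> b)"
  have ua: "Uf \<alpha> a = (l+m)^2/4 \<and> Wf \<alpha> a = (m - l)/(l + m)" using sys_UW[of l m \<alpha> a] assms h by blast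
  have ub: "Uf \<beta> b = (l+m)^2/4 \<and> Wf \<beta> b = (m - l)/(l + m)" using sys_UW[of l m \<beta> b] assms h by blast
  have ab: "\<alpha> = \<beta>"
  proof (rule ccontr)
    assume "\<alpha> \<noteq> \<beta>"
    then consider "\<alpha> < \<beta>" | "\<beta> < \<alpha>" by linarith
    then show False
    proof cases
      case 1
      then show False using key[of \<alpha> a \<beta> b] h ua ub by auto
    next
      case 2
      then show False using key[of \<beta> b \<alpha> a] h ua ub by auto
    qed
  qed
  have "a = b"
  proof (rule ccontr)
    assume "a \<noteq> b"
    then consider "a < b" | "b < a" by linarith
    then show False
    proof cases
      case 1
      then show False using U_mono2[of \<alpha> a b] h ab ua ub by auto
    next
      case 2
      then show False using U_mono2[of \<alpha> b a] h ab ua ub by auto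
    qed
  qed
  then show "\<alpha> = \<beta> \<and> a = b" using ab by simp
qed

end
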